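(* Let $G^S$ be a cycle on $n\ge 3$ state nodes, and let the network $\mathcal G=G^S\cup G^I$ have exactly two external input nodes $u_1,u_2$, attached to distinct state nodes $v_1,v_2$. Then $\mathcal G$ is strongly structurally controllable if and only if $v_1$ and $v_2$ are adjacent in $G^S$.
   Context: Network model: a network $\mathcal G=G^S\cup G^I$ consists of an undirected simple state graph $G^S$ on state nodes $\{1,\dots,n\}$ and a set of $m$ external input nodes $u_1,\dots,u_m$, where each input node $u_r$ has exactly one directed edge, to a state node $v_r$, and the $v_r$ are pairwise distinct; the input matrix is $B=[e_{v_1},\dots,e_{v_m}]\in\mathbb R^{n\times m}$. The dynamics are $\dot x=Mx+Bu$, where $M$ ranges over the family $Q(G^S)$ of symmetric matrices with $M_{ij}=a_{ij}>0$ if $\{i,j\}$ is an edge of $G^S$, $M_{ij}=0$ if $i\ne j$ are non-adjacent, and $M_{ii}=-\sum_{j\in\mathcal N_i}a_{ij}+a_{ii}$ with an arbitrary self-loop weight $a_{ii}<0$ ($\mathcal N_i$ the neighbours of $i$ in $G^S$). The network is strongly structurally controllable (SSC) if for every $M\in Q(G^S)$ the controllability matrix $[B,MB,\dots,M^{n-1}B]$ has rank $n$. *)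

theory Defs
  imports "Jordan_Normal_Form.DL_Rank"
begin

definition simple_graph :: "nat \<Rightarrow> (nat \<Rightarrow> nat \<Rightarrow> bool) \<Rightarrow> bool" where
  "simple_graph n E \<longleftrightarrow>
     (\<forall>i j. E i j \<longrightarrow> i < n \<and> j < n \<and> i \<noteq> j) \<and> (\<forall>i j. E i j \<longrightarrow> E j i)"

definition cycle_graph :: "nat \<Rightarrow> (nat \<Rightarrow> nat \<Rightarrow> bool) \<Rightarrow> bool" where
  "cycle_graph n E \<longleftrightarrow> simple_graph n E \<and>
     (\<forall>i<n. card {j. E i j} = 2) \<and> (\<forall>i<n. \<forall>j<n. E\<^sup>*\<^sup>* i j)"

definition qualified_matrix :: "nat \<Rightarrow> (nat \<Rightarrow> nat \<Rightarrow> bool) \<Rightarrow> real mat \<Rightarrow> bool" where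
  "qualified_matrix n E M \<longleftrightarrow> M \<in> carrier_mat n n \<and>
     (\<forall>i<n. \<forall>j<n. M $$ (i, j) = M $$ (j, i)) \<and>
     (\<forall>i<n. \<forall>j<n. i \<noteq> j \<longrightarrow> (E i j \<longrightarrow> M $$ (i, j) > 0) \<and> (\<not> E i j \<longrightarrow> M $$ (i, j) = 0)) \<and>
     (\<forall>i<n. \<exists>a::real. a < 0 \<and> M $$ (i, i) = - (\<Sum>j\<in>{j. j < n \<and> E i j}. M $$ (i, j)) + a)"

definition input_matrix :: "nat \<Rightarrow> nat list \<Rightarrow> real mat" where
  "input_matrix n vs = mat n (length vs) (\<lambda>(i, r). if i = vs ! r then 1 else 0)"

text \<open>Controllability matrix [B, MB, ..., M^(n-1) B]; column k*m + r is column r of M^k B.\<close>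
definition ctrb_matrix :: "nat \<Rightarrow> real mat \<Rightarrow> real mat \<Rightarrow> real mat" where
  "ctrb_matrix n M B = mat n (n * dim_col B)
     (\<lambda>(i, j). ((M ^\<^sub>m (j div dim_col B)) * B) $$ (i, j mod dim_col B))"

definition SSC :: "nat \<Rightarrow> (nat \<Rightarrow> nat \<Rightarrow> bool) \<Rightarrow> nat list \<Rightarrow> bool" where
  "SSC n E vs \<longleftrightarrow> (\<forall>M. qualified_matrix n E M \<longrightarrow>
      vec_space.rank n (ctrb_matrix n M (input_matrix n vs)) = n)"

end

theory Submission
  imports Defs
begin


lemma rank_full_orth:
  fixes A :: "real mat"
  assumes A: "A \<in> carrier_mat n nc" and r: "vec_space.rank n A = n" and y: "y \<in> carrier_vec n"
    and orth: "\<forall>i<nc. col A i \<bullet> y = 0"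
  shows "y = 0\<^sub>v n"
proof -
  interpret V: vec_space "TYPE(real)" n .
  have P0: "{} \<subseteq> set (cols A) \<and> V.lin_indpt {}"
    using V.finite_lin_indpt2 by auto
  obtain S where S: "finite S" "maximal S (\<lambda>T. T \<subseteq> set (cols A) \<and> V.lin_indpt T)"
    using maximal_exists_superset[of "set (cols A)" "\<lambda>T. T \<subseteq> set (cols A) \<and> V.lin_indpt T" "{}"] P0
    by auto
  have rS: "V.rank A = card S" by (rule V.rank_card_indpt[OF A S(2)])
  have Sc: "S \<subseteq> set (cols A)" "V.lin_indpt S" using S(2) unfolding maximal_def by auto
  have Sc2: "S \<subseteq> carrier_vec n" using Sc(1) A cols_dim by blast
  have "V.basis S"
    by (rule V.dim_li_is_basis, simp, fact, simp add: Sc2, fact, metis V.dim_is_n rS r order_refl)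
  then have sp: "V.span S = carrier_vec n" unfolding V.basis_def by simp
  then have "y \<in> V.span S" using y by simp
  then obtain a T where yT: "y = V.lincomb a T" "finite T" "T \<subseteq> S" using V.in_spanE by blast
  have Tc: "T \<subseteq> carrier_vec n" using yT(3) Sc2 by auto
  have xo: "x \<bullet> y = 0" if "x \<in> T" for x
  proof -
    from that yT(3) Sc(1) have "x \<in> set (cols A)" by auto
    then obtain i where "i < length (cols A)" "x = cols A ! i"
      by (auto simp: in_set_conv_nth)
    then show ?thesis using orth A by auto
  qed
  have "y \<bullet> y = (\<Sum>i<n. y $ i * (\<Sum>x\<in>T. a x * x $ i))"
    using y yT(1) V.lincomb_index[OF _ Tc] unfolding scalar_prod_def
    by (auto intro!: sum.cong simp: lessThan_atLeast0)
  also have "\<dots> = (\<Sum>x\<in>T. a x * (x \<bullet> y))"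
    using Tc y unfolding scalar_prod_def
    by (auto simp: sum_distrib_left sum_distrib_right lessThan_atLeast0 ac_simps intro!: sum.swap[THEN trans] sum.cong)
  also have "\<dots> = 0" using xo by simp
  finally have yy: "y \<bullet> y = 0" .
  have "\<forall>i\<in>{0..<n}. y $ i * y $ i = 0"
    using yy y unfolding scalar_prod_def
    by (subst sum_nonneg_eq_0_iff[symmetric]) auto
  then show ?thesis using y by (auto intro!: eq_vecI)
qed



lemma real_vec_self_zero:
  fixes y :: "real vec"
  assumes "y \<in> carrier_vec n" "y \<bullet> y = 0"
  shows "y = 0\<^sub>v n"
proof -
  have "\<forall>i\<in>{0..<n}. y $ i * y $ i = 0"
    using assms unfolding scalar_prod_def
    by (subst sum_nonneg_eq_0_iff[symmetric]) auto
  then show ?thesis using assms by (auto intro!: eq_vecI)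
qed

lemma rank_full_of_orth:
  fixes A :: "real mat"
  assumes A: "A \<in> carrier_mat n nc"
   and H: "\<And>y. y \<in> carrier_vec n \<Longrightarrow> (\<forall>i<nc. col A i \<bullet> y = 0) \<Longrightarrow> y = 0\<^sub>v n"
  shows "vec_space.rank n A = n"
proof -
  interpret V: vec_space "TYPE(real)" n .
  define G where "G = A * transpose_mat A"
  have G: "G \<in> carrier_mat n n" using A by (simp add: G_def)
  have dG: "det G \<noteq> 0"
  proof
    assume "det G = 0"
    then obtain v where v: "v \<in> carrier_vec n" "v \<noteq> 0\<^sub>v n" "G *\<^sub>v v = 0\<^sub>v n"
      using det_0_iff_vec_prod_zero_field[OF G] by auto
    define w where "w = transpose_mat A *\<^sub>v v"
    have w: "w \<in> carrier_vec nc" using A unfolding w_def carrier_vec_def by simp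
    have Gv: "G *\<^sub>v v = A *\<^sub>v w" unfolding G_def w_def using A v
      by (subst assoc_mult_mat_vec) auto
    have "w \<bullet> w = v \<bullet> (A *\<^sub>v w)" using transpose_vec_mult_scalar[OF A w v(1)] w_def by simp
    also have "\<dots> = v \<bullet> 0\<^sub>v n" using Gv v(3) by simp
    also have "\<dots> = 0" using v(1) by simp
    finally have "w = 0\<^sub>v nc" using real_vec_self_zero w by blast
    moreover have "w $ i = col A i \<bullet> v" if "i < nc" for i
      using that A unfolding w_def by auto
    ultimately have "\<forall>i<nc. col A i \<bullet> v = 0" by auto
    then show False using H v by auto
  qed
  obtain B where B: "B \<in> carrier_mat n n" "G * B = 1\<^sub>m n"
    using det_non_zero_imp_unit[OF G dG, of "()"] unfolding Units_def ring_mat_def by auto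
  have colsc: "set (cols A) \<subseteq> carrier_vec n" using A cols_dim by blast
  have span: "V.span (set (cols A)) = carrier_vec n"
  proof
    show "V.span (set (cols A)) \<subseteq> carrier_vec n" using V.span_closed colsc by auto
  next
    show "carrier_vec n \<subseteq> V.span (set (cols A))"
    proof
      fix x :: "real vec" assume x: "x \<in> carrier_vec n"
      define u where "u = transpose_mat A *\<^sub>v (B *\<^sub>v x)"
      have u: "u \<in> carrier_vec nc" using A B unfolding u_def carrier_vec_def by simp
      have "A *\<^sub>v u = G *\<^sub>v (B *\<^sub>v x)" unfolding G_def u_def using A B x
        by (subst assoc_mult_mat_vec) auto
      also have "\<dots> = (G * B) *\<^sub>v x" using G B x by (subst assoc_mult_mat_vec) auto
      also have "\<dots> = x" using B x by simp
      finally have xu: "x = A *\<^sub>v u" by simp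
      have "V.lincomb_list (\<lambda>i. u $ i) (cols A) = mat_of_cols n (cols A) *\<^sub>v vec (length (cols A)) (\<lambda>i. u $ i)"
        by (rule V.lincomb_list_as_mat_mult) (use colsc in auto)
      also have "\<dots> = A *\<^sub>v u"
      proof -
        have "mat_of_cols n (cols A) = A" using mat_of_cols_cols[of A] A by simp
        moreover have "vec (length (cols A)) (\<lambda>i. u $ i) = u" using A u by auto
        ultimately show ?thesis by simp
      qed
      finally have "x \<in> V.span_list (cols A)" using xu V.in_span_listI by metis
      then show "x \<in> V.span (set (cols A))" using V.span_list_as_span[OF colsc] by simp
    qed
  qed
  have "V.vs (carrier_vec n) = module_vec TYPE(real) n" by (simp add: module_vec_def)
  then show ?thesis unfolding V.rank_def span using V.dim_is_n by metis
qed



fun walk :: "(nat \<Rightarrow> nat \<Rightarrow> bool) \<Rightarrow> nat \<Rightarrow> nat \<Rightarrow> nat \<Rightarrow> nat" where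
  "walk E v w 0 = v"
| "walk E v w (Suc 0) = w"
| "walk E v w (Suc (Suc k)) = (SOME x. E (walk E v w (Suc k)) x \<and> x \<noteq> walk E v w k)"

declare walk.simps(3)[simp del]

lemma card2_other:
  assumes "card S = 2" "a \<in> S" shows "\<exists>b\<in>S. b \<noteq> a"
  using assms by (auto simp: card_2_iff)

lemma card2_eq:
  assumes "card S = 2" "a \<in> S" "b \<in> S" "a \<noteq> b" shows "S = {a, b}"
  using assms by (auto simp: card_2_iff)

lemma walk_step:
  assumes cyc: "cycle_graph n E" and e1: "E (walk E v w k) (walk E v w (Suc k))"
  shows "E (walk E v w (Suc k)) (walk E v w (Suc (Suc k))) \<and> walk E v w (Suc (Suc k)) \<noteq> walk E v w k"
proof -
  have sg: "simple_graph n E" using cyc unfolding cycle_graph_def by auto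
  let ?a = "walk E v w k" and ?b = "walk E v w (Suc k)"
  have bn: "?b < n" using e1 sg unfolding simple_graph_def by blast
  have c: "card {j. E ?b j} = 2" using cyc bn unfolding cycle_graph_def by auto
  have "?a \<in> {j. E ?b j}" using e1 sg unfolding simple_graph_def by auto
  then have ex: "\<exists>x. E ?b x \<and> x \<noteq> ?a" using card2_other[OF c] by auto
  show ?thesis
    by (simp only: walk.simps(3)) (rule someI_ex[OF ex])
qed

lemma walk_edge:
  assumes cyc: "cycle_graph n E" and vw: "E v w"
  shows "E (walk E v w k) (walk E v w (Suc k))"
proof (induction k)
  case 0 then show ?case using vw by simp
next
  case (Suc k) then show ?case using walk_step[OF cyc] by blast
qed

lemma walk_basic:
  assumes cyc: "cycle_graph n E" and vw: "E v w"
  shows "E (walk E v w k) (walk E v w (Suc k)) \<and> walk E v w (Suc (Suc k)) \<noteq> walk E v w k"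
  using walk_edge[OF cyc vw, of k] walk_step[OF cyc walk_edge[OF cyc vw, of k]] by blast

lemma walk_nb:
  assumes cyc: "cycle_graph n E" and vw: "E v w"
  shows "{j. E (walk E v w (Suc k)) j} = {walk E v w k, walk E v w (Suc (Suc k))}"
proof -
  have sg: "simple_graph n E" using cyc unfolding cycle_graph_def by auto
  have e0: "E (walk E v w k) (walk E v w (Suc k))" and
       e1: "E (walk E v w (Suc k)) (walk E v w (Suc (Suc k)))" and
       ne: "walk E v w (Suc (Suc k)) \<noteq> walk E v w k"
    using walk_basic[OF cyc vw, of k] walk_basic[OF cyc vw, of "Suc k"] by auto
  have an: "walk E v w (Suc k) < n" using e1 sg unfolding simple_graph_def by blast
  have c: "card {j. E (walk E v w (Suc k)) j} = 2" using cyc an unfolding cycle_graph_def by auto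
  show ?thesis
    by (rule card2_eq[OF c]) (use e0 e1 ne sg in \<open>auto simp: simple_graph_def\<close>)
qed

lemma walk_lt:
  assumes cyc: "cycle_graph n E" and vw: "E v w"
  shows "walk E v w k < n"
proof -
  have sg: "simple_graph n E" using cyc unfolding cycle_graph_def by auto
  show ?thesis using walk_basic[OF cyc vw, of k] sg unfolding simple_graph_def by blast
qed

lemma walk_global:
  assumes cyc: "cycle_graph n E" and vw: "E v w"
  shows "inj_on (walk E v w) {..<n} \<and> walk E v w ` {..<n} = {..<n} \<and> walk E v w n = v"
proof -
  let ?u = "walk E v w"
  have sg: "simple_graph n E" using cyc unfolding cycle_graph_def by auto
  have irr: "\<not> E a a" for a using sg unfolding simple_graph_def by auto
  have sym: "E a b \<Longrightarrow> E b a" for a b using sg unfolding simple_graph_def by auto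
  have edge: "E (?u k) (?u (Suc k))" for k using walk_basic[OF cyc vw] by auto
  have nb2: "?u (Suc (Suc k)) \<noteq> ?u k" for k using walk_basic[OF cyc vw] by auto
  have lt: "?u k < n" for k using walk_lt[OF cyc vw] .
  have "\<not> inj_on ?u {..n}"
  proof
    assume "inj_on ?u {..n}"
    then have "card (?u ` {..n}) = Suc n" by (simp add: card_image)
    moreover have "?u ` {..n} \<subseteq> {..<n}" using lt by auto
    then have "card (?u ` {..n}) \<le> card {..<n}" by (intro card_mono) auto
    then have "card (?u ` {..n}) \<le> n" by simp
    ultimately show False by simp
  qed
  then obtain i0 j0 where ij0: "i0 \<le> n" "j0 \<le> n" "i0 \<noteq> j0" "?u i0 = ?u j0"
    unfolding inj_on_def by auto
  obtain i j where ij: "i \<le> n" "j \<le> n" "i < j" "?u i = ?u j"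
  proof (cases "i0 < j0")
    case True then show ?thesis using that ij0 by blast
  next
    case False then show ?thesis using that[of j0 i0] ij0 by auto
  qed
  define Q where "Q m \<longleftrightarrow> (\<exists>i<m. ?u i = ?u m)" for m
  have Qj: "Q j" using ij unfolding Q_def by auto
  define m where "m = (LEAST m. Q m)"
  have Qm: "Q m" unfolding m_def by (rule LeastI[of Q j, OF Qj])
  have mn: "m \<le> n" using Least_le[of Q j, OF Qj] ij unfolding m_def by simp
  have injm: "inj_on ?u {..<m}"
  proof (rule inj_onI)
    fix a b assume a: "a \<in> {..<m}" and b: "b \<in> {..<m}" and e: "?u a = ?u b"
    show "a = b"
    proof (rule ccontr)
      assume "a \<noteq> b"
      then consider "a < b" | "b < a" by linarith
      then show False
      proof cases
        case 1
        then have "Q b" using e unfolding Q_def by auto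
        then show False using not_less_Least[of b Q] b unfolding m_def by auto
      next
        case 2
        then have "Q a" using e unfolding Q_def by auto
        then show False using not_less_Least[of a Q] a unfolding m_def by auto
      qed
    qed
  qed
  obtain i where i: "i < m" "?u i = ?u m" using Qm unfolding Q_def by auto
  have m0: "m \<noteq> 0" using i by auto
  have im1: "i \<noteq> m - 1"
  proof
    assume "i = m - 1"
    then have "m = Suc i" using i by auto
    then show False using edge[of i] i irr by auto
  qed
  have im2: "i \<noteq> m - 2"
  proof
    assume h: "i = m - 2"
    with i im1 have "m = Suc (Suc i)" by auto
    then show False using nb2[of i] i by auto
  qed
  have i0: "i = 0"
  proof (rule ccontr)
    assume "i \<noteq> 0"
    then obtain i' where i': "i = Suc i'" by (cases i) auto
    have "?u (m - 1) \<in> {j. E (?u (Suc i')) j}"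
      using edge[of "m - 1"] m0 i i' sym by auto
    then have "?u (m - 1) \<in> {?u i', ?u (Suc (Suc i'))}" using walk_nb[OF cyc vw, of i'] by simp
    then have "?u (m - 1) = ?u i' \<or> ?u (m - 1) = ?u (Suc (Suc i'))" by simp
    moreover have "m - 1 \<noteq> i'" "m - 1 \<noteq> Suc (Suc i')" "m - 1 < m" "i' < m" "Suc (Suc i') < m"
      using i i' im1 im2 m0 by auto
    ultimately show False using injm unfolding inj_on_def by auto
  qed
  have um: "?u m = v" using i i0 by simp
  have m3: "m \<ge> 3" using m0 im1 im2 i0 by auto
  define S where "S = ?u ` {..<m}"
  have "?u 0 \<in> S" unfolding S_def using m0 by (intro imageI) auto
  then have vS: "v \<in> S" by simp
  have closed: "b \<in> S" if a: "a \<in> S" and ab: "E a b" for a b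
  proof -
    from a obtain k where k: "k < m" "a = ?u k" unfolding S_def by auto
    show ?thesis
    proof (cases k)
      case 0
      have c: "card {j. E v j} = 2" using cyc lt[of 0] unfolding cycle_graph_def by auto
      have "1 < m" "m - 1 < m" "1 \<noteq> m - 1" using m3 by auto
      then have "?u 1 \<noteq> ?u (m - 1)" using injm unfolding inj_on_def by auto
      moreover have "E v (?u 1)" using edge[of 0] by simp
      moreover have "Suc (m - 1) = m" using m0 by simp
      then have "E (?u (m - 1)) v" using edge[of "m - 1"] um by simp
      then have "E v (?u (m - 1))" using sym by blast
      ultimately have "{j. E v j} = {?u 1, ?u (m - 1)}" using card2_eq[OF c] by auto
      moreover have "?u 1 \<in> S" unfolding S_def using m3 by (intro imageI) simp
      moreover have "?u (m - 1) \<in> S" unfolding S_def using m3 by (intro imageI) simp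
      ultimately show ?thesis using ab k 0 by auto
    next
      case (Suc k')
      have "b \<in> {?u k', ?u (Suc (Suc k'))}" using walk_nb[OF cyc vw, of k'] ab k Suc by auto
      moreover have "?u k' \<in> S" unfolding S_def using k Suc by (intro imageI) simp
      moreover have "?u (Suc (Suc k')) \<in> S"
      proof (cases "Suc (Suc k') < m")
        case True then show ?thesis unfolding S_def by (intro imageI) simp
      next
        case False then have "Suc (Suc k') = m" using k Suc by auto
        then show ?thesis using um vS by simp
      qed
      ultimately show ?thesis by auto
    qed
  qed
  have "j \<in> S" if "j < n" for j
  proof -
    have "E\<^sup>*\<^sup>* v j" using cyc that lt[of 0] unfolding cycle_graph_def by auto
    then show ?thesis
      by (induction rule: rtranclp_induct) (use vS closed in auto)
  qed
  then have sub: "{..<n} \<subseteq> S" by auto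
  have "card S = m" unfolding S_def using injm by (simp add: card_image)
  moreover have "card {..<n} \<le> card S" using sub by (rule card_mono[rotated]) (simp add: S_def)
  ultimately have mn': "m = n" using mn by simp
  have "S \<subseteq> {..<n}" unfolding S_def using lt by auto
  then show ?thesis using sub injm um mn' unfolding S_def by auto
qed



lemma input_entry:
  fixes M :: "real mat"
  assumes M: "M \<in> carrier_mat n n" and i: "i < n" and r: "r < length vs" and vr: "vs ! r < n"
  shows "(M * input_matrix n vs) $$ (i, r) = M $$ (i, vs ! r)"
proof -
  have "(M * input_matrix n vs) $$ (i, r) = (\<Sum>l\<in>{0..<n}. M $$ (i, l) * (if l = vs ! r then 1 else 0))"
    using M i r unfolding input_matrix_def by (simp add: scalar_prod_def)
  also have "\<dots> = (\<Sum>l\<in>{0..<n}. if l = vs ! r then M $$ (i, l) else 0)"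
    by (intro sum.cong) auto
  also have "\<dots> = M $$ (i, vs ! r)" using vr by (simp add: sum.delta')
  finally show ?thesis .
qed

lemma col_ctrb_scalar:
  fixes M :: "real mat"
  assumes M: "M \<in> carrier_mat n n" and vs: "\<forall>v\<in>set vs. v < n" and y: "y \<in> carrier_vec n"
    and j: "j < n * length vs"
  shows "col (ctrb_matrix n M (input_matrix n vs)) j \<bullet> y
    = (transpose_mat (M ^\<^sub>m (j div length vs)) *\<^sub>v y) $ (vs ! (j mod length vs))"
proof -
  let ?m = "length vs" let ?k = "j div ?m" let ?r = "j mod ?m"
  have m0: "?m > 0" using j by (cases "?m") auto
  have r: "?r < ?m" using m0 by simp
  have vr: "vs ! ?r < n" using vs r by auto
  have dimB: "dim_col (input_matrix n vs) = ?m" unfolding input_matrix_def by simp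
  have Mk: "M ^\<^sub>m ?k \<in> carrier_mat n n" using M by simp
  have "col (ctrb_matrix n M (input_matrix n vs)) j \<bullet> y
      = (\<Sum>i\<in>{0..<n}. (M ^\<^sub>m ?k) $$ (i, vs ! ?r) * y $ i)"
    unfolding scalar_prod_def using y j dimB input_entry[OF Mk _ r vr]
    by (auto simp: ctrb_matrix_def intro!: sum.cong)
  also have "\<dots> = col (M ^\<^sub>m ?k) (vs ! ?r) \<bullet> y"
    using M vr y by (auto simp: scalar_prod_def intro!: sum.cong)
  also have "\<dots> = row (transpose_mat (M ^\<^sub>m ?k)) (vs ! ?r) \<bullet> y"
    using M vr by (subst row_transpose) auto
  also have "\<dots> = (transpose_mat (M ^\<^sub>m ?k) *\<^sub>v y) $ (vs ! ?r)"
    using M vr by simp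
  finally show ?thesis .
qed

lemma ctrb_orth:
  fixes M :: "real mat"
  assumes M: "M \<in> carrier_mat n n" and vs: "\<forall>v\<in>set vs. v < n" and y: "y \<in> carrier_vec n"
  shows "(\<forall>j < n * length vs. col (ctrb_matrix n M (input_matrix n vs)) j \<bullet> y = 0)
     \<longleftrightarrow> (\<forall>k<n. \<forall>r<length vs. (transpose_mat (M ^\<^sub>m k) *\<^sub>v y) $ (vs ! r) = 0)"
proof
  assume H: "\<forall>j < n * length vs. col (ctrb_matrix n M (input_matrix n vs)) j \<bullet> y = 0"
  show "\<forall>k<n. \<forall>r<length vs. (transpose_mat (M ^\<^sub>m k) *\<^sub>v y) $ (vs ! r) = 0"
  proof (intro allI impI)
    fix k r assume k: "k < n" and r: "r < length vs"
    let ?j = "k * length vs + r"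
    have j: "?j < n * length vs"
    proof -
      have "?j < k * length vs + length vs" using r by simp
      also have "\<dots> = Suc k * length vs" by simp
      also have "\<dots> \<le> n * length vs" using k by (intro mult_right_mono) auto
      finally show ?thesis .
    qed
    have ne: "length vs \<noteq> 0" using r by auto
    have "?j div length vs = k" using r div_mult_self3[OF ne, of k r] by simp
    moreover have "?j mod length vs = r" using r by simp
    ultimately
    show "(transpose_mat (M ^\<^sub>m k) *\<^sub>v y) $ (vs ! r) = 0"
      using H j col_ctrb_scalar[OF M vs y j] by simp
  qed
next
  assume H: "\<forall>k<n. \<forall>r<length vs. (transpose_mat (M ^\<^sub>m k) *\<^sub>v y) $ (vs ! r) = 0"
  show "\<forall>j < n * length vs. col (ctrb_matrix n M (input_matrix n vs)) j \<bullet> y = 0"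
  proof (intro allI impI)
    fix j assume j: "j < n * length vs"
    have m0: "length vs > 0" using j by (cases "length vs") auto
    have "j div length vs < n" using j div_less_iff_less_mult[OF m0, of j n] by (simp add: mult.commute)
    moreover have "j mod length vs < length vs" using m0 by simp
    ultimately show "col (ctrb_matrix n M (input_matrix n vs)) j \<bullet> y = 0"
      using H col_ctrb_scalar[OF M vs y j] by simp
  qed
qed

lemma ctrb_carrier: "ctrb_matrix n M (input_matrix n vs) \<in> carrier_mat n (n * length vs)"
  unfolding ctrb_matrix_def input_matrix_def by simp

lemma transpose_pow_rec:
  fixes M :: "real mat"
  assumes M: "M \<in> carrier_mat n n" and sym: "transpose_mat M = M" and y: "y \<in> carrier_vec n"
  shows "transpose_mat (M ^\<^sub>m Suc k) *\<^sub>v y = M *\<^sub>v (transpose_mat (M ^\<^sub>m k) *\<^sub>v y)"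
proof -
  have "transpose_mat (M ^\<^sub>m Suc k) = transpose_mat M * transpose_mat (M ^\<^sub>m k)"
    using transpose_mult[of "M ^\<^sub>m k" n n M n] M by simp
  moreover have "transpose_mat (M ^\<^sub>m k) \<in> carrier_mat n n" using M by simp
  ultimately show ?thesis using sym M y by (simp add: assoc_mult_mat_vec[of _ n n _ n])
qed

lemma transpose_pow0:
  fixes M :: "real mat"
  assumes M: "M \<in> carrier_mat n n" and y: "y \<in> carrier_vec n"
  shows "transpose_mat (M ^\<^sub>m 0) *\<^sub>v y = y"
  using M y by simp

lemma row_pattern:
  fixes M :: "real mat"
  assumes M: "M \<in> carrier_mat n n" and i: "i < n" and x: "x \<in> carrier_vec n"
    and irr: "\<not> E i i"
    and z: "\<And>l. l < n \<Longrightarrow> l \<noteq> i \<Longrightarrow> \<not> E i l \<Longrightarrow> M $$ (i, l) = 0"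
  shows "(M *\<^sub>v x) $ i = M $$ (i, i) * x $ i + (\<Sum>l\<in>{l. l < n \<and> E i l}. M $$ (i, l) * x $ l)"
proof -
  have "(M *\<^sub>v x) $ i = (\<Sum>l\<in>{0..<n}. M $$ (i, l) * x $ l)"
    using M i x by (simp add: scalar_prod_def)
  also have "\<dots> = M $$ (i, i) * x $ i + (\<Sum>l\<in>{0..<n} - {i}. M $$ (i, l) * x $ l)"
    using i by (subst sum.remove[of _ i]) auto
  also have "(\<Sum>l\<in>{0..<n} - {i}. M $$ (i, l) * x $ l) = (\<Sum>l\<in>{l. l < n \<and> E i l}. M $$ (i, l) * x $ l)"
    by (rule sum.mono_neutral_right) (use irr z in auto)
  finally show ?thesis .
qed


lemma qual_facts:
  assumes q: "qualified_matrix n E M" and sg: "simple_graph n E"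
  shows "M \<in> carrier_mat n n" "transpose_mat M = M"
    "\<And>i l. i < n \<Longrightarrow> l < n \<Longrightarrow> l \<noteq> i \<Longrightarrow> \<not> E i l \<Longrightarrow> M $$ (i, l) = 0"
    "\<And>i l. i < n \<Longrightarrow> l < n \<Longrightarrow> E i l \<Longrightarrow> M $$ (i, l) > 0"
proof -
  show M: "M \<in> carrier_mat n n" using q unfolding qualified_matrix_def by auto
  show "transpose_mat M = M"
    by (rule eq_matI) (use M q in \<open>auto simp: qualified_matrix_def\<close>)
  show "\<And>i l. i < n \<Longrightarrow> l < n \<Longrightarrow> l \<noteq> i \<Longrightarrow> \<not> E i l \<Longrightarrow> M $$ (i, l) = 0"
    using q unfolding qualified_matrix_def by auto
  show "\<And>i l. i < n \<Longrightarrow> l < n \<Longrightarrow> E i l \<Longrightarrow> M $$ (i, l) > 0"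
    using q sg unfolding qualified_matrix_def simple_graph_def by auto
qed

lemma dir_adj:
  fixes M :: "real mat"
  assumes n3: "n \<ge> 3" and cyc: "cycle_graph n E" and v1: "v1 < n" and v2: "v2 < n"
    and e12: "E v1 v2" and q: "qualified_matrix n E M" and y: "y \<in> carrier_vec n"
    and H: "\<forall>k<n. (transpose_mat (M ^\<^sub>m k) *\<^sub>v y) $ v1 = 0 \<and> (transpose_mat (M ^\<^sub>m k) *\<^sub>v y) $ v2 = 0"
  shows "y = 0\<^sub>v n"
proof -
  have sg: "simple_graph n E" using cyc unfolding cycle_graph_def by auto
  have irr: "\<not> E a a" for a using sg unfolding simple_graph_def by auto
  have sym: "E a b \<Longrightarrow> E b a" for a b using sg unfolding simple_graph_def by auto
  note QF = qual_facts[OF q sg]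
  have M: "M \<in> carrier_mat n n" by (rule QF(1))
  define z where "z k = transpose_mat (M ^\<^sub>m k) *\<^sub>v y" for k
  have z0: "z 0 = y" unfolding z_def by (rule transpose_pow0[OF M y])
  have zS: "z (Suc k) = M *\<^sub>v z k" for k unfolding z_def by (rule transpose_pow_rec[OF M QF(2) y])
  have zc: "z k \<in> carrier_vec n" for k
  proof -
    have "transpose_mat (M ^\<^sub>m k) \<in> carrier_mat n n" using M by simp
    then show ?thesis unfolding z_def using y by (rule mult_mat_vec_carrier)
  qed
  have e21: "E v2 v1" using sym e12 .
  let ?u = "walk E v2 v1"
  have ul: "?u k < n" for k by (rule walk_lt[OF cyc e21])
  define Q where "Q j \<longleftrightarrow> (\<forall>k. k + j \<le> n - 1 \<longrightarrow> z k $ ?u j = 0)" for j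
  have QQ: "Q j \<and> Q (Suc j)" for j
  proof (induction j)
    case 0
    have "Q 0" unfolding Q_def using H n3 unfolding z_def by auto
    moreover have "Q 1" unfolding Q_def using H n3 unfolding z_def by auto
    ultimately show ?case by simp
  next
    case (Suc j)
    have Qj: "Q j" and Qj1: "Q (Suc j)" using Suc by auto
    have "Q (Suc (Suc j))" unfolding Q_def
    proof (intro allI impI)
      fix k assume kj: "k + Suc (Suc j) \<le> n - 1"
      let ?i = "?u (Suc j)" and ?a = "?u j" and ?b = "?u (Suc (Suc j))"
      have nb: "{l. E ?i l} = {?a, ?b}" by (rule walk_nb[OF cyc e21])
      have ab: "?b \<noteq> ?a" using walk_basic[OF cyc e21, of j] by auto
      have nbs: "{l. l < n \<and> E ?i l} = {?a, ?b}" using nb ul by auto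
      have "(M *\<^sub>v z k) $ ?i = M $$ (?i, ?i) * z k $ ?i + (\<Sum>l\<in>{l. l < n \<and> E ?i l}. M $$ (?i, l) * z k $ l)"
        by (rule row_pattern[OF M ul zc irr]) (use QF(3) ul in auto)
      also have "\<dots> = M $$ (?i, ?i) * z k $ ?i + M $$ (?i, ?a) * z k $ ?a + M $$ (?i, ?b) * z k $ ?b"
        unfolding nbs using ab by simp
      finally have eq: "z (Suc k) $ ?i = M $$ (?i, ?i) * z k $ ?i + M $$ (?i, ?a) * z k $ ?a + M $$ (?i, ?b) * z k $ ?b"
        using zS by simp
      have "z (Suc k) $ ?i = 0" using Qj1 kj unfolding Q_def by auto
      moreover have "z k $ ?i = 0" using Qj1 kj unfolding Q_def by auto
      moreover have "z k $ ?a = 0" using Qj kj unfolding Q_def by auto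
      ultimately have "M $$ (?i, ?b) * z k $ ?b = 0" using eq by simp
      moreover have "M $$ (?i, ?b) > 0"
        using QF(4)[OF ul ul] walk_basic[OF cyc e21, of "Suc j"] by auto
      ultimately show "z k $ ?b = 0" by simp
    qed
    then show ?case using Qj1 by simp
  qed
  have G: "?u ` {..<n} = {..<n}" using walk_global[OF cyc e21] by auto
  show ?thesis
  proof (rule eq_vecI)
    fix l assume "l < dim_vec (0\<^sub>v n :: real vec)"
    then have l: "l < n" by simp
    then obtain j where j: "j < n" "l = ?u j" using G by (metis imageE lessThan_iff)
    have "z 0 $ ?u j = 0" using QQ[of j] j unfolding Q_def by auto
    then show "y $ l = (0\<^sub>v n :: real vec) $ l" using z0 j l by simp
  qed (use y in simp)
qed

lemma dir_nonadj:
  assumes n3: "n \<ge> 3" and cyc: "cycle_graph n E" and v1: "v1 < n" and v2: "v2 < n"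
    and v12: "v1 \<noteq> v2" and ne: "\<not> E v1 v2"
  shows "\<exists>M x. qualified_matrix n E M \<and> x \<in> carrier_vec n \<and> x \<noteq> 0\<^sub>v n \<and>
     (\<forall>k. (transpose_mat (M ^\<^sub>m k) *\<^sub>v x) $ v1 = 0 \<and> (transpose_mat (M ^\<^sub>m k) *\<^sub>v x) $ v2 = 0)"
proof -
  have sg: "simple_graph n E" using cyc unfolding cycle_graph_def by auto
  have irr: "\<not> E a a" for a using sg unfolding simple_graph_def by auto
  have sym: "E a b \<Longrightarrow> E b a" for a b using sg unfolding simple_graph_def by auto
  have en: "E a b \<Longrightarrow> b < n" for a b using sg unfolding simple_graph_def by auto
  have c2: "card {j. E i j} = 2" if "i < n" for i using cyc that unfolding cycle_graph_def by auto
  have nbeq: "{t. t < n \<and> E i t} = {t. E i t}" for i using en by auto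
  obtain w where vw: "E v1 w" using c2[OF v1] by (auto simp: card_2_iff)
  let ?u = "walk E v1 w"
  have ul: "?u k < n" for k by (rule walk_lt[OF cyc vw])
  have G: "inj_on ?u {..<n}" "?u ` {..<n} = {..<n}" "?u n = v1" using walk_global[OF cyc vw] by auto
  have edge: "E (?u k) (?u (Suc k))" for k using walk_basic[OF cyc vw] by auto
  have uinj: "j = k" if "j < n" "k < n" "?u j = ?u k" for j k
    using G(1) that unfolding inj_on_def by auto
  have ex: "\<exists>j<n. ?u j = l" if "l < n" for l
  proof -
    have "l \<in> ?u ` {..<n}" using G(2) that by auto
    then show ?thesis by auto
  qed
  obtain p where p: "p < n" "?u p = v2" using ex[OF v2] by auto
  have p0: "p \<noteq> 0"
  proof
    assume "p = 0" then show False using p v12 by simp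
  qed
  have p1: "p \<noteq> 1"
  proof
    assume "p = 1" then have "w = v2" using p by simp
    then show False using vw ne by simp
  qed
  have pn: "p \<noteq> n - 1"
  proof
    assume h: "p = n - 1"
    have "Suc (n - 1) = n" using n3 by simp
    then have "E (?u (n - 1)) v1" using edge[of "n - 1"] G(3) by simp
    then show False using h p ne sym by auto
  qed
  have p2: "2 \<le> p" "Suc p < n" using p0 p1 pn p by auto
  define idx where "idx l = (THE j. j < n \<and> ?u j = l)" for l
  have idx: "idx (?u j) = j" if "j < n" for j
    unfolding idx_def by (rule the_equality) (use that uinj in auto)
  define f :: "nat \<Rightarrow> real" where "f j = (if 0 < j \<and> j < p then 1 else if p < j then -1 else 0)" for j
  define x where "x = vec n (\<lambda>l. f (idx l))"
  have xc: "x \<in> carrier_vec n" unfolding x_def by simp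
  have xu: "x $ ?u j = f j" if "j < n" for j unfolding x_def using ul idx that by simp
  have xb: "\<bar>x $ l\<bar> \<le> 1" if l: "l < n" for l
  proof -
    obtain j where "j < n" "?u j = l" using ex[OF l] by auto
    then show ?thesis using xu unfolding f_def by auto
  qed
  define s where "s l = (\<Sum>t\<in>{t. t < n \<and> E l t}. x $ t)" for l
  have fin: "finite {t. t < n \<and> E l t}" for l by simp
  have cardN: "card {t. t < n \<and> E l t} = 2" if "l < n" for l using c2[OF that] nbeq by simp
  have sb: "\<bar>s l\<bar> \<le> 2" if "l < n" for l
  proof -
    have "\<bar>s l\<bar> \<le> (\<Sum>t\<in>{t. t < n \<and> E l t}. \<bar>x $ t\<bar>)" unfolding s_def by (rule sum_abs)
    also have "\<dots> \<le> (\<Sum>t\<in>{t. t < n \<and> E l t}. 1)" by (rule sum_mono) (use xb in auto)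
    also have "\<dots> = 2" using cardN[OF that] by simp
    finally show ?thesis .
  qed
  define M :: "real mat" where "M = mat n n (\<lambda>(i, j). if i = j then -10 - x $ i * s i else if E i j then 1 else 0)"
  have Mc: "M \<in> carrier_mat n n" unfolding M_def by simp
  have Mij: "M $$ (i, j) = (if i = j then -10 - x $ i * s i else if E i j then 1 else 0)"
    if "i < n" "j < n" for i j unfolding M_def using that by simp
  have q: "qualified_matrix n E M"
    unfolding qualified_matrix_def
  proof (intro conjI allI impI)
    show "M \<in> carrier_mat n n" by (rule Mc)
  next
    fix i j assume "i < n" "j < n" then show "M $$ (i, j) = M $$ (j, i)" using Mij sym by auto
  next
    fix i j assume "i < n" "j < n" "i \<noteq> j" "E i j" then show "M $$ (i, j) > 0" using Mij by auto
  next
    fix i j assume "i < n" "j < n" "i \<noteq> j" "\<not> E i j" then show "M $$ (i, j) = 0" using Mij by auto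
  next
    fix i assume i: "i < n"
    have "(\<Sum>j\<in>{j. j < n \<and> E i j}. M $$ (i, j)) = (\<Sum>j\<in>{j. j < n \<and> E i j}. 1)"
      by (rule sum.cong) (use Mij i irr in auto)
    also have "\<dots> = 2" using cardN[OF i] by simp
    finally have S2: "(\<Sum>j\<in>{j. j < n \<and> E i j}. M $$ (i, j)) = 2" .
    have "\<bar>x $ i * s i\<bar> \<le> 1 * 2" unfolding abs_mult
      by (rule mult_mono) (use xb[OF i] sb[OF i] in auto)
    then have "M $$ (i, i) + 2 < 0" using Mij[OF i i] by auto
    then show "\<exists>a::real. a < 0 \<and> M $$ (i, i) = - (\<Sum>j\<in>{j. j < n \<and> E i j}. M $$ (i, j)) + a"
      using S2 by (intro exI[of _ "M $$ (i, i) + 2"]) auto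
  qed
  have s0: "s i = 0 \<or> x $ i * x $ i = 1" if i: "i < n" for i
  proof -
    obtain j where j: "j < n" "?u j = i" using ex[OF i] by auto
    consider "0 < j \<and> j < p" | "p < j" | "j = 0" | "j = p" by linarith
    then show ?thesis
    proof cases
      case 1 then show ?thesis using xu[OF j(1)] j unfolding f_def by auto
    next
      case 2 then show ?thesis using xu[OF j(1)] j unfolding f_def by auto
    next
      case 3
      have "Suc (n - 1) = n" using n3 by simp
      then have "E (?u (n - 1)) v1" using edge[of "n - 1"] G(3) by simp
      then have a: "E v1 (?u (n - 1))" using sym by blast
      have b: "E v1 (?u 1)" using edge[of 0] by simp
      have d: "?u 1 \<noteq> ?u (n - 1)" using uinj[of 1 "n - 1"] n3 by auto
      have "{t. t < n \<and> E v1 t} = {?u 1, ?u (n - 1)}"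
        using card2_eq[OF c2[OF v1], of "?u 1" "?u (n - 1)"] b a d nbeq by simp
      then have "s v1 = x $ ?u 1 + x $ ?u (n - 1)" unfolding s_def using d by simp
      also have "\<dots> = f 1 + f (n - 1)" using xu[of 1] xu[of "n - 1"] n3 by simp
      also have "\<dots> = 0" unfolding f_def using p2 by auto
      finally show ?thesis using 3 j by auto
    next
      case 4
      have pp: "Suc (p - 1) = p" using p2 by simp
      have nb: "{t. E (?u p) t} = {?u (p - 1), ?u (Suc p)}"
        using walk_nb[OF cyc vw, of "p - 1"] pp by simp
      have d: "?u (p - 1) \<noteq> ?u (Suc p)" using walk_basic[OF cyc vw, of "p - 1"] pp by auto
      have "s (?u p) = x $ ?u (p - 1) + x $ ?u (Suc p)" unfolding s_def nbeq nb using d by simp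
      also have "\<dots> = f (p - 1) + f (Suc p)" using xu[of "p - 1"] xu[of "Suc p"] p2 by simp
      also have "\<dots> = 0" unfolding f_def using p2 by auto
      finally show ?thesis using 4 j by auto
    qed
  qed
  have eig: "M *\<^sub>v x = (-10) \<cdot>\<^sub>v x"
  proof (rule eq_vecI)
    fix i assume "i < dim_vec ((-10) \<cdot>\<^sub>v x)"
    then have i: "i < n" using xc by simp
    have "(M *\<^sub>v x) $ i = M $$ (i, i) * x $ i + (\<Sum>l\<in>{l. l < n \<and> E i l}. M $$ (i, l) * x $ l)"
      by (rule row_pattern[OF Mc i xc irr]) (use Mij i in auto)
    also have "(\<Sum>l\<in>{l. l < n \<and> E i l}. M $$ (i, l) * x $ l) = s i"
      unfolding s_def by (rule sum.cong) (use Mij i irr in auto)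
    finally have "(M *\<^sub>v x) $ i = (-10 - x $ i * s i) * x $ i + s i" using Mij[OF i i] by simp
    also have "\<dots> = -10 * x $ i" using s0[OF i] by (auto simp: algebra_simps)
    finally show "(M *\<^sub>v x) $ i = ((-10) \<cdot>\<^sub>v x) $ i" using i xc by simp
  qed (use Mc xc in simp)
  have Mt: "transpose_mat M = M" by (rule eq_matI) (use Mc Mij sym in auto)
  have pw: "transpose_mat (M ^\<^sub>m k) *\<^sub>v x = (-10) ^ k \<cdot>\<^sub>v x" for k
  proof (induction k)
    case 0 then show ?case using transpose_pow0[OF Mc xc] by simp
  next
    case (Suc k)
    have "transpose_mat (M ^\<^sub>m Suc k) *\<^sub>v x = M *\<^sub>v ((-10) ^ k \<cdot>\<^sub>v x)"
      using transpose_pow_rec[OF Mc Mt xc, of k] Suc by simp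
    also have "\<dots> = (-10) ^ k \<cdot>\<^sub>v (M *\<^sub>v x)" by (rule mult_mat_vec[OF Mc xc])
    also have "\<dots> = (-10) ^ Suc k \<cdot>\<^sub>v x" unfolding eig by (simp add: smult_smult_assoc mult.commute)
    finally show ?case .
  qed
  have xv1: "x $ v1 = 0" using xu[of 0] n3 unfolding f_def by simp
  have xv2: "x $ v2 = 0" using xu[of p] p unfolding f_def by simp
  have xnz: "x \<noteq> 0\<^sub>v n"
  proof
    assume "x = 0\<^sub>v n"
    moreover have "x $ ?u 1 = 1" using xu[of 1] n3 p2 unfolding f_def by simp
    ultimately show False using ul[of 1] by simp
  qed
  show ?thesis
    using q xc xnz pw xv1 xv2 v1 v2 by (intro exI[of _ M] exI[of _ x]) (auto)
qed

lemma two_idx: "(\<forall>r<length [a, b]. P ([a, b] ! r)) \<longleftrightarrow> P a \<and> P b"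
proof
  assume "\<forall>r<length [a, b]. P ([a, b] ! r)"
  then show "P a \<and> P b" by (metis length_Cons list.size(3) nth_Cons_0 nth_Cons_Suc lessI zero_less_Suc)
next
  assume h: "P a \<and> P b"
  show "\<forall>r<length [a, b]. P ([a, b] ! r)"
  proof (intro allI impI)
    fix r assume "r < length [a, b]"
    then have "r = 0 \<or> r = 1" by auto
    then show "P ([a, b] ! r)" using h by auto
  qed
qed

theorem theorem3:
  fixes n :: nat and E :: "nat \<Rightarrow> nat \<Rightarrow> bool" and v1 v2 :: nat
  assumes "n \<ge> 3" and "cycle_graph n E"
    and "v1 < n" and "v2 < n" and "v1 \<noteq> v2"
  shows "SSC n E [v1, v2] \<longleftrightarrow> E v1 v2"
proof -
  note n3 = assms(1) and cyc = assms(2) and v1 = assms(3) and v2 = assms(4) and v12 = assms(5)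
  have sg: "simple_graph n E" using cyc unfolding cycle_graph_def by auto
  have vs: "\<forall>v\<in>set [v1, v2]. v < n" using v1 v2 by auto
  have C: "ctrb_matrix n M (input_matrix n [v1, v2]) \<in> carrier_mat n (n * length [v1, v2])" for M
    by (rule ctrb_carrier)
  show ?thesis
  proof
    assume ssc: "SSC n E [v1, v2]"
    show "E v1 v2"
    proof (rule ccontr)
      assume ne: "\<not> E v1 v2"
      obtain M x where q: "qualified_matrix n E M" and xc: "x \<in> carrier_vec n" and xnz: "x \<noteq> 0\<^sub>v n"
        and Hx: "\<forall>k. (transpose_mat (M ^\<^sub>m k) *\<^sub>v x) $ v1 = 0 \<and> (transpose_mat (M ^\<^sub>m k) *\<^sub>v x) $ v2 = 0"
        using dir_nonadj[OF n3 cyc v1 v2 v12 ne] by blast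
      have M: "M \<in> carrier_mat n n" using qual_facts[OF q sg] by simp
      have rk: "vec_space.rank n (ctrb_matrix n M (input_matrix n [v1, v2])) = n"
        using ssc q unfolding SSC_def by auto
      have "\<forall>k<n. \<forall>r<length [v1, v2]. (transpose_mat (M ^\<^sub>m k) *\<^sub>v x) $ ([v1, v2] ! r) = 0"
      proof (rule allI, rule impI)
        fix k assume "k < n"
        show "\<forall>r<length [v1, v2]. (transpose_mat (M ^\<^sub>m k) *\<^sub>v x) $ ([v1, v2] ! r) = 0"
          using Hx two_idx[of v1 v2 "\<lambda>v. (transpose_mat (M ^\<^sub>m k) *\<^sub>v x) $ v = 0"] by simp
      qed
      then have "\<forall>j < n * length [v1, v2]. col (ctrb_matrix n M (input_matrix n [v1, v2])) j \<bullet> x = 0"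
        using ctrb_orth[OF M vs xc] by blast
      then have "x = 0\<^sub>v n" using rank_full_orth[OF C rk xc] by blast
      then show False using xnz by simp
    qed
  next
    assume e: "E v1 v2"
    show "SSC n E [v1, v2]" unfolding SSC_def
    proof (intro allI impI)
      fix M assume q: "qualified_matrix n E M"
      have M: "M \<in> carrier_mat n n" using qual_facts[OF q sg] by simp
      show "vec_space.rank n (ctrb_matrix n M (input_matrix n [v1, v2])) = n"
      proof (rule rank_full_of_orth[OF C])
        fix y :: "real vec" assume y: "y \<in> carrier_vec n"
          and orth: "\<forall>i<n * length [v1, v2]. col (ctrb_matrix n M (input_matrix n [v1, v2])) i \<bullet> y = 0"
        have H1: "\<forall>k<n. \<forall>r<length [v1, v2]. (transpose_mat (M ^\<^sub>m k) *\<^sub>v y) $ ([v1, v2] ! r) = 0"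
          using ctrb_orth[OF M vs y] orth by blast
        have "\<forall>k<n. (transpose_mat (M ^\<^sub>m k) *\<^sub>v y) $ v1 = 0 \<and> (transpose_mat (M ^\<^sub>m k) *\<^sub>v y) $ v2 = 0"
        proof (rule allI, rule impI)
          fix k assume "k < n"
          then have "\<forall>r<length [v1, v2]. (transpose_mat (M ^\<^sub>m k) *\<^sub>v y) $ ([v1, v2] ! r) = 0" using H1 by blast
          then show "(transpose_mat (M ^\<^sub>m k) *\<^sub>v y) $ v1 = 0 \<and> (transpose_mat (M ^\<^sub>m k) *\<^sub>v y) $ v2 = 0"
            using two_idx[of v1 v2 "\<lambda>v. (transpose_mat (M ^\<^sub>m k) *\<^sub>v y) $ v = 0"] by simp
        qed
        then show "y = 0\<^sub>v n" by (rule dir_adj[OF n3 cyc v1 v2 e q y])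
      qed
    qed
  qed
qed


end
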